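(* Let $M=(E,\mathcal{I})$ be a matroid, $\Delta$ a nonnegative integer, $w:E\to\{-\Delta,\dots,\Delta\}$ integer weights and $\mu\ge 0$. Let $A,B\in\mathcal{I}$ be disjoint with $|A|=|B|=k$ and $|w(A)-w(B)|\le\mu$. Then there are unicolor subsets $A'\subseteq A$ and $B'\subseteq B$ of equal cardinality such that (i) $(A\setminus A')\cup B'\in\mathcal{I}$, (ii) $|A'|=|B'|\ge (k-\mu)/(2\Delta+1)^4$, and (iii) $w(a)\ge w(b)$ for each $a\in A'$ and $b\in B'$.
   Context: $w(S)=\sum_{e\in S}w(e)$. A set $S\subseteq E$ is unicolor if $w(x)=w(y)$ for all $x,y\in S$. *)

theory Defs
  imports Complex_Main
begin

definition matroid :: "'a set \<Rightarrow> 'a set set \<Rightarrow> bool" where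
  "matroid E I \<longleftrightarrow>
     finite E \<and>
     (\<forall>X\<in>I. X \<subseteq> E) \<and>
     {} \<in> I \<and>
     (\<forall>X Y. X \<in> I \<longrightarrow> Y \<subseteq> X \<longrightarrow> Y \<in> I) \<and>
     (\<forall>X Y. X \<in> I \<longrightarrow> Y \<in> I \<longrightarrow> card X < card Y \<longrightarrow>
        (\<exists>e\<in>Y - X. insert e X \<in> I))"

definition wsum :: "('a \<Rightarrow> int) \<Rightarrow> 'a set \<Rightarrow> int" where
  "wsum w S = (\<Sum>e\<in>S. w e)"

definition unicolor :: "('a \<Rightarrow> int) \<Rightarrow> 'a set \<Rightarrow> bool" where
  "unicolor w S \<longleftrightarrow> (\<forall>x\<in>S. \<forall>y\<in>S. w x = w y)"

end

theory Submission
  imports Defs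
begin

lemma m_fin: "matroid E I \<Longrightarrow> X \<in> I \<Longrightarrow> finite X"
  unfolding matroid_def by (meson finite_subset)

lemma m_sub: "matroid E I \<Longrightarrow> X \<in> I \<Longrightarrow> Y \<subseteq> X \<Longrightarrow> Y \<in> I"
  unfolding matroid_def by blast

lemma m_aug: "matroid E I \<Longrightarrow> X \<in> I \<Longrightarrow> Y \<in> I \<Longrightarrow> card X < card Y \<Longrightarrow> \<exists>e\<in>Y - X. insert e X \<in> I"
  unfolding matroid_def by blast

lemma aug:
  assumes M: "matroid E I" and "X \<in> I" "Y \<in> I" "card X \<le> n" "n \<le> card Y"
  shows "\<exists>Z \<subseteq> Y - X. X \<union> Z \<in> I \<and> card (X \<union> Z) = n"
  using assms(2,4)
proof (induction "n - card X" arbitrary: X)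
  case 0
  then show ?case by (intro exI[of _ "{}"]) auto
next
  case (Suc m)
  have "card X < card Y" using Suc.hyps(2) \<open>n \<le> card Y\<close> by linarith
  then obtain e where e: "e \<in> Y - X" "insert e X \<in> I" using m_aug[OF M Suc.prems(1) \<open>Y \<in> I\<close>] by blast
  have fX: "finite X" using m_fin[OF M Suc.prems(1)] .
  have ci: "card (insert e X) = card X + 1" using e fX by simp
  have m: "m = n - card (insert e X)" using ci Suc.hyps(2) by simp
  have le: "card (insert e X) \<le> n" using ci Suc.hyps(2) by simp
  obtain Z where Z: "Z \<subseteq> Y - insert e X" "insert e X \<union> Z \<in> I" "card (insert e X \<union> Z) = n"
    using Suc.hyps(1)[OF m e(2) le] by blast
  have "X \<union> insert e Z = insert e X \<union> Z" by blast
  then show ?case using Z e by (intro exI[of _ "insert e Z"]) auto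
qed

lemma R1:
  assumes M: "matroid E I" and A: "A \<in> I" and "A' \<subseteq> A" "A \<inter> B' = {}"
    and Y: "(A - A') \<union> B' \<in> I" and c: "card A' = card B'" and "A'' \<subseteq> A'"
  shows "\<exists>B''\<subseteq>B'. card B'' = card A'' \<and> (A - A'') \<union> B'' \<in> I"
proof -
  have fA: "finite A" using m_fin[OF M A] .
  have fY: "finite ((A - A') \<union> B')" using m_fin[OF M Y] .
  hence fB: "finite B'" by simp
  have X: "A - A'' \<in> I" using m_sub[OF M A] by blast
  have cX: "card (A - A'') = card A - card A''" using assms fA
    by (meson card_Diff_subset finite_subset order_trans)
  have cY: "card ((A - A') \<union> B') = card A"
  proof -
    have "card ((A - A') \<union> B') = card (A - A') + card B'"
      using assms fA fB by (intro card_Un_disjoint) auto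
    also have "card (A - A') = card A - card A'" using assms fA
      by (meson card_Diff_subset finite_subset)
    finally show ?thesis using c card_mono[OF fA \<open>A' \<subseteq> A\<close>] by simp
  qed
  obtain Z where Z: "Z \<subseteq> ((A - A') \<union> B') - (A - A'')" "(A - A'') \<union> Z \<in> I"
     "card ((A - A'') \<union> Z) = card A"
    using aug[OF M X Y, of "card A"] cX cY by auto
  have ZB: "Z \<subseteq> B'" using Z(1) assms by auto
  have fZ: "finite Z" using ZB fB finite_subset by blast
  have "card ((A - A'') \<union> Z) = card (A - A'') + card Z"
    using Z(1) fA fZ by (intro card_Un_disjoint) auto
  moreover have "card A'' \<le> card A" using card_mono[OF fA] assms(3,7) by blast
  ultimately have "card Z = card A''" using Z(3) cX by linarith
  thus ?thesis using ZB Z(2) by blast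
qed

lemma R2:
  assumes M: "matroid E I" and A: "A \<in> I" and AA: "A' \<subseteq> A" and dj: "A \<inter> B'' = {}"
    and X: "(A - A') \<union> B'' \<in> I" and c: "card B'' \<le> card A'"
  shows "\<exists>A''\<subseteq>A'. card A'' = card B'' \<and> (A - A'') \<union> B'' \<in> I"
proof -
  have fA: "finite A" using m_fin[OF M A] .
  have fX: "finite ((A - A') \<union> B'')" using m_fin[OF M X] .
  hence fB: "finite B''" by simp
  have fAA: "finite (A - A')" using fA by simp
  have cA': "card (A - A') = card A - card A'" using AA fA
    by (meson card_Diff_subset finite_subset)
  have dj2: "(A - A') \<inter> B'' = {}" using dj by blast
  have cX: "card ((A - A') \<union> B'') = card A - card A' + card B''"
    using card_Un_disjoint[OF fAA fB dj2] cA' by simp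
  have le: "card A' \<le> card A" using card_mono[OF fA AA] .
  have leX: "card ((A - A') \<union> B'') \<le> card A" using cX c le by linarith
  obtain Z where Z: "Z \<subseteq> A - ((A - A') \<union> B'')" "(A - A') \<union> B'' \<union> Z \<in> I"
     "card ((A - A') \<union> B'' \<union> Z) = card A"
    using aug[OF M X A leX order_refl] by blast
  have ZA: "Z \<subseteq> A'" using Z(1) by blast
  have fZ: "finite Z" using ZA AA fA by (meson finite_subset)
  have dj3: "((A - A') \<union> B'') \<inter> Z = {}" using Z(1) by blast
  have "card ((A - A') \<union> B'' \<union> Z) = card ((A - A') \<union> B'') + card Z"
    using card_Un_disjoint[OF fX fZ dj3] .
  hence cZ: "card Z = card A' - card B''" using Z(3) cX c le by linarith
  have e: "(A - (A' - Z)) \<union> B'' = (A - A') \<union> B'' \<union> Z" using ZA AA by blast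
  have "card (A' - Z) = card A' - card Z" using ZA fZ by (simp add: card_Diff_subset)
  hence "card (A' - Z) = card B''" using cZ c by simp
  moreover have "A' - Z \<subseteq> A'" by blast
  ultimately show ?thesis using e Z(2) by metis
qed

lemma E0:
  assumes M: "matroid E I" and A: "A \<in> I" and B: "B \<in> I" and dj: "A \<inter> B = {}"
    and c: "card A = card B" and P: "P \<subseteq> A" and Q: "Q \<subseteq> B"
  shows "\<exists>A1 B1. A1 \<subseteq> P \<and> B1 \<subseteq> Q \<and> card A1 = card B1 \<and> (A - A1) \<union> B1 \<in> I \<and>
     int (card A1) \<ge> int (card P) + int (card Q) - int (card A)"
proof -
  have fA: "finite A" using m_fin[OF M A] .
  have fB: "finite B" using m_fin[OF M B] .
  have cAP: "card (A - P) = card A - card P" using P fA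
    by (meson card_Diff_subset finite_subset)
  have cP: "card P \<le> card A" using card_mono[OF fA P] .
  have cQ: "card Q \<le> card B" using card_mono[OF fB Q] .
  show ?thesis
  proof (cases "card Q \<le> card (A - P)")
    case True
    have "A - {} \<union> {} \<in> I" using A by simp
    moreover have "int (card P) + int (card Q) - int (card A) \<le> int (card {})"
      using True cAP cP by simp
    ultimately show ?thesis by blast
  next
    case False
    have X: "A - P \<in> I" using m_sub[OF M A] by blast
    have Y: "Q \<in> I" using m_sub[OF M B Q] .
    have le1: "card (A - P) \<le> card Q" using False by simp
    obtain Z where Z: "Z \<subseteq> Q - (A - P)" "(A - P) \<union> Z \<in> I" "card ((A - P) \<union> Z) = card Q"
      using aug[OF M X Y le1 order_refl] by blast
    have ZQ: "Z \<subseteq> Q" using Z(1) by blast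
    have fZ: "finite Z" using ZQ Q fB by (meson finite_subset)
    have fAP: "finite (A - P)" using fA by simp
    have dj2: "(A - P) \<inter> Z = {}" using Z(1) by blast
    have "card ((A - P) \<union> Z) = card (A - P) + card Z"
      using card_Un_disjoint[OF fAP fZ dj2] .
    hence cZ: "card Z = card Q - card (A - P)" using Z(3) by linarith
    have djZ: "A \<inter> Z = {}" using dj ZQ Q by blast
    have cZP: "card Z \<le> card P" using cZ cAP cP cQ c by linarith
    obtain A1 where A1: "A1 \<subseteq> P" "card A1 = card Z" "(A - A1) \<union> Z \<in> I"
      using R2[OF M A P djZ Z(2) cZP] by blast
    have "int (card A1) \<ge> int (card P) + int (card Q) - int (card A)"
      using A1(2) cZ cAP cP False by linarith
    then show ?thesis using A1 ZQ by blast
  qed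
qed

lemma pigeon:
  assumes "finite S" "finite C" "C \<noteq> {}" "\<forall>x\<in>S. f x \<in> C"
  shows "\<exists>c\<in>C. card {x\<in>S. f x = c} * card C \<ge> card S"
proof (rule ccontr)
  assume "\<not> ?thesis"
  hence lt: "\<forall>c\<in>C. card {x\<in>S. f x = c} * card C < card S" by auto
  have "card S = card (\<Union>c\<in>C. {x\<in>S. f x = c})"
    using assms(4) by (intro arg_cong[where f=card]) auto
  also have "\<dots> = (\<Sum>c\<in>C. card {x\<in>S. f x = c})"
    using assms by (intro card_UN_disjoint) auto
  finally have eq: "card S * card C = (\<Sum>c\<in>C. card {x\<in>S. f x = c} * card C)"
    by (simp add: sum_distrib_right)
  also have "\<dots> < (\<Sum>c\<in>C. card S)"
    using lt assms by (intro sum_strict_mono) auto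
  also have "\<dots> = card S * card C" by simp
  finally show False by simp
qed

lemma cnt: "finite A \<Longrightarrow> int (card {x\<in>A. P x}) = (\<Sum>x\<in>A. if P x then 1 else 0)"
  by (simp add: sum.If_cases Int_def)

lemma thresh:
  fixes w :: "'a \<Rightarrow> int" and d :: nat
  assumes fA: "finite A" and fB: "finite B" and cA: "card A = k" and cB: "card B = k"
    and wA: "\<forall>a\<in>A. - int d \<le> w a \<and> w a \<le> int d"
    and wB: "\<forall>a\<in>B. - int d \<le> w a \<and> w a \<le> int d"
    and mu: "\<bar>real_of_int (wsum w A - wsum w B)\<bar> \<le> \<mu>"
  shows "\<exists>s. (real_of_int (int (card {a\<in>A. s \<le> w a}) - int (card {b\<in>B. s < w b})))
            * (2 * real d + 1) \<ge> real k - \<mu>"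
proof (rule ccontr)
  assume "\<not> ?thesis"
  hence lt: "\<forall>s. (real_of_int (int (card {a\<in>A. s \<le> w a}) - int (card {b\<in>B. s < w b})))
            * (2 * real d + 1) < real k - \<mu>" by (simp add: not_le)
  define S where "S = {- int d .. int d}"
  have cS: "card S = 2 * d + 1" unfolding S_def by simp
  have h1: "(\<Sum>s\<in>S. int (card {a\<in>A. s \<le> w a})) = (\<Sum>a\<in>A. w a + int d + 1)"
  proof -
    have "(\<Sum>s\<in>S. int (card {a\<in>A. s \<le> w a})) = (\<Sum>s\<in>S. \<Sum>a\<in>A. if s \<le> w a then 1 else 0)"
      using fA by (simp add: cnt)
    also have "\<dots> = (\<Sum>a\<in>A. \<Sum>s\<in>S. if s \<le> w a then 1 else 0)" by (rule sum.swap)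
    also have "\<dots> = (\<Sum>a\<in>A. int (card {s\<in>S. s \<le> w a}))"
      by (rule sum.cong[OF refl], rule cnt[symmetric], simp add: S_def)
    also have "\<dots> = (\<Sum>a\<in>A. w a + int d + 1)"
    proof (rule sum.cong)
      fix a assume "a \<in> A"
      hence "{s\<in>S. s \<le> w a} = {- int d .. w a}" using wA unfolding S_def by auto
      moreover have "- int d \<le> w a" using wA \<open>a \<in> A\<close> by blast
      ultimately show "int (card {s\<in>S. s \<le> w a}) = w a + int d + 1" by simp
    qed simp
    finally show ?thesis .
  qed
  have h2: "(\<Sum>s\<in>S. int (card {b\<in>B. s < w b})) = (\<Sum>b\<in>B. w b + int d)"
  proof -
    have "(\<Sum>s\<in>S. int (card {b\<in>B. s < w b})) = (\<Sum>s\<in>S. \<Sum>b\<in>B. if s < w b then 1 else 0)"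
      using fB by (simp add: cnt)
    also have "\<dots> = (\<Sum>b\<in>B. \<Sum>s\<in>S. if s < w b then 1 else 0)" by (rule sum.swap)
    also have "\<dots> = (\<Sum>b\<in>B. int (card {s\<in>S. s < w b}))"
      by (rule sum.cong[OF refl], rule cnt[symmetric], simp add: S_def)
    also have "\<dots> = (\<Sum>b\<in>B. w b + int d)"
    proof (rule sum.cong)
      fix b assume "b \<in> B"
      hence "{s\<in>S. s < w b} = {- int d ..< w b}" using wB unfolding S_def by auto
      moreover have "- int d \<le> w b" using wB \<open>b \<in> B\<close> by blast
      ultimately show "int (card {s\<in>S. s < w b}) = w b + int d" by simp
    qed simp
    finally show ?thesis .
  qed
  define F where "F s = int (card {a\<in>A. s \<le> w a}) - int (card {b\<in>B. s < w b})" for s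
  have sF: "(\<Sum>s\<in>S. F s) = wsum w A - wsum w B + int k"
    unfolding F_def sum_subtractf h1 h2 wsum_def
    by (simp add: sum.distrib cA cB)
  have "(\<Sum>s\<in>S. real_of_int (F s) * (2 * real d + 1)) < (\<Sum>s\<in>S. real k - \<mu>)"
    using lt unfolding F_def by (intro sum_strict_mono) (auto simp: S_def)
  moreover have "(\<Sum>s\<in>S. real_of_int (F s) * (2 * real d + 1)) = real_of_int (\<Sum>s\<in>S. F s) * (2 * real d + 1)"
    by (simp add: sum_distrib_right)
  moreover have "(\<Sum>s\<in>S. real k - \<mu>) = (real k - \<mu>) * (2 * real d + 1)"
  proof -
    have "real (card S) = 2 * real d + 1" using cS by simp
    thus ?thesis by simp
  qed
  ultimately have lt2: "real_of_int (\<Sum>s\<in>S. F s) * (2 * real d + 1) < (real k - \<mu>) * (2 * real d + 1)"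
    by linarith
  have "real_of_int (\<Sum>s\<in>S. F s) < real k - \<mu>"
  proof (rule ccontr)
    assume "\<not> ?thesis"
    hence "(real k - \<mu>) * (2 * real d + 1) \<le> real_of_int (\<Sum>s\<in>S. F s) * (2 * real d + 1)"
      by (intro mult_right_mono) auto
    with lt2 show False by simp
  qed
  with sF mu show False by simp
qed

theorem corollary9:
  fixes E :: "'a set" and I :: "'a set set" and w :: "'a \<Rightarrow> int"
    and \<Delta> :: nat and \<mu> :: real and A B :: "'a set" and k :: nat
  assumes "matroid E I"
    and "\<forall>e\<in>E. - int \<Delta> \<le> w e \<and> w e \<le> int \<Delta>"
    and "\<mu> \<ge> 0"
    and "A \<in> I" and "B \<in> I" and "A \<inter> B = {}"
    and "card A = k" and "card B = k"
    and "\<bar>real_of_int (wsum w A - wsum w B)\<bar> \<le> \<mu>"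
  shows "\<exists>A' B'. A' \<subseteq> A \<and> B' \<subseteq> B \<and> unicolor w A' \<and> unicolor w B' \<and>
           card A' = card B' \<and>
           (A - A') \<union> B' \<in> I \<and>
           real (card A') \<ge> (real k - \<mu>) / (2 * real \<Delta> + 1) ^ 4 \<and>
           (\<forall>a\<in>A'. \<forall>b\<in>B'. w a \<ge> w b)"
proof -
  note M = assms(1)
  have fA: "finite A" using m_fin[OF M assms(4)] .
  have fB: "finite B" using m_fin[OF M assms(5)] .
  have AE: "A \<subseteq> E" "B \<subseteq> E" using M assms(4,5) unfolding matroid_def by auto
  have wA: "\<forall>a\<in>A. - int \<Delta> \<le> w a \<and> w a \<le> int \<Delta>" using AE assms(2) by auto
  have wB: "\<forall>a\<in>B. - int \<Delta> \<le> w a \<and> w a \<le> int \<Delta>" using AE assms(2) by auto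
  obtain s where s: "(real_of_int (int (card {a\<in>A. s \<le> w a}) - int (card {b\<in>B. s < w b})))
            * (2 * real \<Delta> + 1) \<ge> real k - \<mu>"
    using thresh[OF fA fB assms(7,8) wA wB assms(9)] by blast
  define P where "P = {a\<in>A. s \<le> w a}"
  define Q where "Q = {b\<in>B. w b \<le> s}"
  have "card B = card Q + card {b\<in>B. s < w b}"
    unfolding Q_def using fB by (subst card_Un_disjoint[symmetric]) (auto intro!: arg_cong[where f=card])
  hence cQ: "int (card Q) = int k - int (card {b\<in>B. s < w b})" using assms(8) by simp
  obtain A1 B1 where AB1: "A1 \<subseteq> P" "B1 \<subseteq> Q" "card A1 = card B1" "(A - A1) \<union> B1 \<in> I"
     "int (card A1) \<ge> int (card P) + int (card Q) - int (card A)"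
    using E0[OF M assms(4,5,6), of P Q] assms(7,8) unfolding P_def Q_def by auto
  define C where "C = {- int \<Delta> .. int \<Delta>}"
  have cC: "card C = 2 * \<Delta> + 1" unfolding C_def by simp
  have B1B: "B1 \<subseteq> B" using AB1(2) unfolding Q_def by auto
  have A1A: "A1 \<subseteq> A" using AB1(1) unfolding P_def by auto
  have fC: "finite C" "C \<noteq> {}" unfolding C_def by auto
  have fB1: "finite B1" using B1B fB finite_subset by blast
  have B1C: "\<forall>x\<in>B1. w x \<in> C" using B1B wB unfolding C_def by auto
  obtain d where d: "d \<in> C" "card {x\<in>B1. w x = d} * card C \<ge> card B1"
    using pigeon[OF fB1 fC B1C] by blast
  define B2 where "B2 = {x\<in>B1. w x = d}"
  have B2B1: "B2 \<subseteq> B1" unfolding B2_def by blast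
  have "(A - A1) \<union> B2 \<subseteq> (A - A1) \<union> B1" using B2B1 by blast
  from m_sub[OF M AB1(4) this] have B2I: "(A - A1) \<union> B2 \<in> I" .
  have cB2: "card B2 \<le> card A1" using AB1(3) card_mono[OF fB1 B2B1] by simp
  obtain A2 where A2: "A2 \<subseteq> A1" "card A2 = card B2" "(A - A2) \<union> B2 \<in> I"
  proof -
    have dj: "A \<inter> B2 = {}" using assms(6) B1B unfolding B2_def by blast
    from R2[OF M assms(4) A1A dj B2I cB2] show ?thesis using that by blast
  qed
  have A2A: "A2 \<subseteq> A" using A2 A1A by auto
  have fA2: "finite A2" using A2A fA finite_subset by blast
  have A2C: "\<forall>x\<in>A2. w x \<in> C" using A2A wA unfolding C_def by auto
  obtain c where c: "c \<in> C" "card {x\<in>A2. w x = c} * card C \<ge> card A2"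
    using pigeon[OF fA2 fC A2C] by blast
  define A3 where "A3 = {x\<in>A2. w x = c}"
  obtain B3 where B3: "B3 \<subseteq> B2" "card B3 = card A3" "(A - A3) \<union> B3 \<in> I"
  proof -
    have dj: "A \<inter> B2 = {}" using assms(6) B1B unfolding B2_def by blast
    have "A3 \<subseteq> A2" unfolding A3_def by blast
    from R1[OF M assms(4) A2A dj A2(3) A2(2) this] show ?thesis using that by blast
  qed
  have B3B: "B3 \<subseteq> B" using B3 B1B unfolding B2_def by auto
  have A3A: "A3 \<subseteq> A" using A2A unfolding A3_def by auto
  have uA: "unicolor w A3" unfolding unicolor_def A3_def by auto
  have uB: "unicolor w B3" using B3(1) unfolding unicolor_def B2_def by auto
  have ord: "\<forall>a\<in>A3. \<forall>b\<in>B3. w a \<ge> w b"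
  proof (intro ballI)
    fix a b assume "a \<in> A3" "b \<in> B3"
    hence "s \<le> w a" "w b \<le> s" using A2 AB1 B3 unfolding A3_def B2_def P_def Q_def by auto
    thus "w a \<ge> w b" by simp
  qed
  define t where "t = 2 * real \<Delta> + 1"
  have t1: "t \<ge> 1" unfolding t_def by simp
  have i1: "real (card A3) * t \<ge> real (card B2)"
    using c A2(2) cC unfolding A3_def t_def
    by (metis (mono_tags, lifting) of_nat_1 of_nat_add of_nat_le_iff of_nat_mult of_nat_numeral)
  have i2: "real (card B2) * t \<ge> real (card A1)"
    using d AB1(3) cC unfolding B2_def t_def
    by (metis (mono_tags, lifting) of_nat_1 of_nat_add of_nat_le_iff of_nat_mult of_nat_numeral)
  have i3: "real (card A1) \<ge> real_of_int (int (card {a\<in>A. s \<le> w a}) - int (card {b\<in>B. s < w b}))"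
    using AB1(5) cQ assms(7) unfolding P_def by linarith
  have "real (card A3) * t ^ 3 \<ge> real k - \<mu>"
  proof -
    have "real k - \<mu> \<le> real_of_int (int (card {a\<in>A. s \<le> w a}) - int (card {b\<in>B. s < w b})) * t"
      using s unfolding t_def .
    also have "\<dots> \<le> real (card A1) * t" using i3 t1 by (intro mult_right_mono) auto
    also have "\<dots> \<le> real (card B2) * t * t" using i2 t1 by (intro mult_right_mono) auto
    also have "\<dots> \<le> real (card A3) * t * t * t" using i1 t1 by (intro mult_right_mono) auto
    finally show ?thesis by (simp add: power3_eq_cube mult.assoc)
  qed
  hence bound: "real (card A3) \<ge> (real k - \<mu>) / t ^ 4"
  proof (cases "real k - \<mu> \<le> 0")
    case True
    have tp: "t ^ 4 > 0" using t1 by simp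
    have "(real k - \<mu>) / t ^ 4 \<le> 0" using True tp by (intro divide_nonpos_pos) auto
    then show ?thesis by (meson of_nat_0_le_iff order_trans)
  next
    case False
    have "(real k - \<mu>) / t ^ 4 \<le> (real k - \<mu>) / t ^ 3"
      using False t1 by (intro divide_left_mono) (auto intro: power_increasing)
    also have "\<dots> \<le> real (card A3)" using \<open>real (card A3) * t ^ 3 \<ge> real k - \<mu>\<close> t1
      by (simp add: divide_le_eq)
    finally show ?thesis .
  qed
  show ?thesis
    using A3A B3B uA uB B3 ord bound unfolding t_def
    by (intro exI[of _ A3] exI[of _ B3]) auto
qed

end
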